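(* Let $k\ge2$, $n>0$, $\lambda>0$ and let $\mathbf{p}$ be a distribution on $[k]$. Let $N\sim\mathbf{Poi}(n)$ and, given $N$, let $x_1,\dots,x_N$ be i.i.d. from $\mathbf{p}$. Each user $i$ outputs, for each $j\in[k]$, the message $(j,\mathbf{1}\{x_i=j\})$ together with $s_{i,j}\sim\mathbf{Poi}(\lambda/N)$ additional messages $(j,b)$ where each $b\sim\mathrm{Bernoulli}(1/2)$, all randomness independent. Let $N_j$ be the total number of messages equal to $(j,1)$, let $\mu=\frac nk+\frac\lambda2$, and let \[ Z=\frac kn\sum_{j=1}^k\big((N_j-\mu)^2-N_j\big). \] Then $\mathbb{E}[Z]=nk\|\mathbf{p}-\mathbf{U}\|_2^2$. In particular, (1) if $\mathbf{p}=\mathbf{U}$ then $\mathbb{E}[Z]=0$, and (2) if $d_{TV}(\mathbf{p},\mathbf{U})>\alpha$ then $\mathbb{E}[Z]>4n\alpha^2$.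
   Context: $\mathbf{U}$ is the uniform distribution on $[k]=\{1,\dots,k\}$, $d_{TV}(\mathbf{p},\mathbf{q})=\frac12\|\mathbf{p}-\mathbf{q}\|_1$, and $\alpha\in(0,1]$. *)

theory Defs
  imports "HOL-Probability.Probability" "HOL-Library.Multiset"
begin

primrec seq_pmf :: "'a pmf list \<Rightarrow> 'a list pmf" where
  "seq_pmf [] = return_pmf []"
| "seq_pmf (P # Ps) = do { x \<leftarrow> P; xs \<leftarrow> seq_pmf Ps; return_pmf (x # xs) }"

definition coord_msgs :: "real \<Rightarrow> nat \<Rightarrow> nat \<Rightarrow> (nat \<times> bool) list pmf" where
  "coord_msgs r x j = do {
     s \<leftarrow> poisson_pmf r;
     bs \<leftarrow> replicate_pmf s (bernoulli_pmf (1/2));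
     return_pmf ((j, x = j) # map (\<lambda>b. (j, b)) bs) }"

definition user_msgs :: "nat \<Rightarrow> real \<Rightarrow> nat \<Rightarrow> (nat \<times> bool) list pmf" where
  "user_msgs k r x = map_pmf concat (seq_pmf (map (coord_msgs r x) [1..<Suc k]))"

text \<open>Convention for N = 0 (where Poi(lambda/N) is undefined): the blanket noise consists,
  for each j, of Poi(lambda) messages (j,b), b ~ Bernoulli(1/2); this is exactly the law of
  the total noise sent for coordinate j when N >= 1.\<close>
definition blanket_msgs :: "nat \<Rightarrow> real \<Rightarrow> (nat \<times> bool) list pmf" where
  "blanket_msgs k lam = map_pmf concat (seq_pmf (map (\<lambda>j. do {
      s \<leftarrow> poisson_pmf lam;
      bs \<leftarrow> replicate_pmf s (bernoulli_pmf (1/2));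
      return_pmf (map (\<lambda>b. (j, b)) bs) }) [1..<Suc k]))"

definition protocol :: "nat \<Rightarrow> real \<Rightarrow> real \<Rightarrow> nat pmf \<Rightarrow> (nat \<times> bool) multiset pmf" where
  "protocol k n lam p = do {
     N \<leftarrow> poisson_pmf n;
     ms \<leftarrow> (if N = 0 then blanket_msgs k lam
            else do {
              xs \<leftarrow> replicate_pmf N p;
              mss \<leftarrow> seq_pmf (map (user_msgs k (lam / real N)) xs);
              return_pmf (concat mss) });
     return_pmf (mset ms) }"

definition msg_count :: "(nat \<times> bool) multiset \<Rightarrow> nat \<Rightarrow> real" where
  "msg_count M j = real (count M (j, True))"

definition stat_Z :: "nat \<Rightarrow> real \<Rightarrow> real \<Rightarrow> (nat \<times> bool) multiset \<Rightarrow> real" where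
  "stat_Z k n lam M =
     (let \<mu> = n / real k + lam / 2 in
      real k / n * (\<Sum>j = 1..k. (msg_count M j - \<mu>)\<^sup>2 - msg_count M j))"

definition unif :: "nat \<Rightarrow> nat pmf" where
  "unif k = pmf_of_set {1..k}"

definition dTV :: "nat \<Rightarrow> nat pmf \<Rightarrow> nat pmf \<Rightarrow> real" where
  "dTV k p q = (1/2) * (\<Sum>j = 1..k. \<bar>pmf p j - pmf q j\<bar>)"

end

theory Submission
  imports Defs
begin


lemma pmf_sums_expectation:
  fixes P :: "nat pmf" and f :: "nat \<Rightarrow> real"
  assumes nn: "\<And>i. f i \<ge> 0" and s: "(\<lambda>i. pmf P i * f i) sums s"
  shows "integrable P f" "measure_pmf.expectation P f = s"
proof -
  have int: "integrable (count_space UNIV) (\<lambda>i. pmf P i * f i)"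
    unfolding integrable_count_space_nat_iff using s nn
    by (simp add: sums_iff abs_mult)
  then show "integrable P f"
    unfolding measure_pmf_eq_density by (subst integrable_density) auto
  have "measure_pmf.expectation P f = (\<integral>i. pmf P i * f i \<partial>count_space UNIV)"
    unfolding measure_pmf_eq_density by (subst integral_density) auto
  also have "\<dots> = s" using int s by (simp add: integral_count_space_nat sums_iff)
  finally show "measure_pmf.expectation P f = s" .
qed

lemma cancel_aux: "(X::real) > 0 \<Longrightarrow> F > 0 \<Longrightarrow> a / (X * F) * e * X = a / F * e"
  by (simp add: field_simps)

lemma exp_sums_real: "(\<lambda>i. (m::real) ^ i / fact i) sums exp m"
  using exp_converges[of m] by (simp add: divide_inverse mult.commute scaleR_conv_of_real)

lemma poisson_sums0:
  assumes "(m::real) > 0"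
  shows "(\<lambda>i. pmf (poisson_pmf m) i) sums 1"
proof -
  have "(\<lambda>i. m ^ i / fact i * exp (-m)) sums (exp m * exp (-m))"
    by (rule sums_mult2[OF exp_sums_real])
  then show ?thesis using assms by (simp add: exp_minus field_simps)
qed

lemma poisson_sums1:
  assumes "(m::real) > 0"
  shows "(\<lambda>i. pmf (poisson_pmf m) i * real i) sums m"
proof -
  have "(\<lambda>i. m ^ i / fact i * exp (-m)) sums 1" using poisson_sums0[OF assms] assms by simp
  then have "(\<lambda>i. m * (m ^ i / fact i * exp (-m))) sums (m * 1)"
    by (rule sums_mult)
  moreover have "m * (m ^ i / fact i * exp (-m)) = m ^ Suc i / fact (Suc i) * exp (-m) * real (Suc i)" for i
    by (simp add: field_simps fact_Suc del: of_nat_Suc)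
  ultimately have "(\<lambda>i. (\<lambda>i. m ^ i / fact i * exp (-m) * real i) (Suc i)) sums m" by (simp add: mult.assoc)
  then show ?thesis using assms by (subst (asm) sums_Suc_iff) simp
qed

lemma poisson_sums2:
  assumes "(m::real) > 0"
  shows "(\<lambda>i. pmf (poisson_pmf m) i * (real i * (real i - 1))) sums (m^2)"
proof -
  have "(\<lambda>i. m ^ i / fact i * exp (-m)) sums 1" using poisson_sums0[OF assms] assms by simp
  then have "(\<lambda>i. m^2 * (m ^ i / fact i * exp (-m))) sums (m^2 * 1)"
    by (rule sums_mult)
  moreover have "m^2 * (m ^ i / fact i * exp (-m)) = m ^ Suc (Suc i) / fact (Suc (Suc i)) * exp (-m) * (real (Suc (Suc i)) * (real (Suc (Suc i)) - 1))" for i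
  proof -
    have f: "(fact (Suc (Suc i)) :: real) = (real i + 2) * (real i + 1) * fact i"
      by (simp add: fact_Suc algebra_simps)
    have g: "real (Suc (Suc i)) * (real (Suc (Suc i)) - 1) = (real i + 2) * (real i + 1)"
      by (simp add: algebra_simps)
    have X: "(real i + 2) * (real i + 1) > 0" by simp
    have "m ^ Suc (Suc i) / fact (Suc (Suc i)) * exp (-m) * (real (Suc (Suc i)) * (real (Suc (Suc i)) - 1))
       = m ^ Suc (Suc i) / (((real i + 2) * (real i + 1)) * fact i) * exp (-m) * ((real i + 2) * (real i + 1))"
      by (simp only: f g)
    also have "\<dots> = m ^ Suc (Suc i) / fact i * exp (-m)"
      using X by (rule cancel_aux) simp
    finally show ?thesis by (simp add: power2_eq_square)
  qed
  ultimately have "(\<lambda>i. (\<lambda>i. m ^ i / fact i * exp (-m) * (real i * (real i - 1))) (Suc (Suc i))) sums (m^2)" by (simp only: mult_1_right)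
  then show ?thesis using assms by (subst (asm) sums_Suc_iff, subst (asm) sums_Suc_iff) simp
qed

lemma poisson_quad:
  assumes "(m::real) > 0"
  shows "integrable (poisson_pmf m) (\<lambda>i. (real i - \<mu>)^2 - real i)"
    "measure_pmf.expectation (poisson_pmf m) (\<lambda>i. (real i - \<mu>)^2 - real i) = (m - \<mu>)^2"
proof -
  have nn: "real i * (real i - 1) \<ge> 0" for i :: nat by (cases i) auto
  note A = pmf_sums_expectation[OF nn poisson_sums2[OF assms]]
  note B = pmf_sums_expectation[OF _ poisson_sums1[OF assms]]
  have A1: "integrable (poisson_pmf m) (\<lambda>i. real i * (real i - 1))"
    and A2: "measure_pmf.expectation (poisson_pmf m) (\<lambda>i. real i * (real i - 1)) = m^2"
    using A by (auto simp: of_nat_diff)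
  have B1: "integrable (poisson_pmf m) (\<lambda>i. real i)"
    and B2: "measure_pmf.expectation (poisson_pmf m) (\<lambda>i. real i) = m"
    using B by auto
  have eq: "(\<lambda>i. (real i - \<mu>)^2 - real i) = (\<lambda>i. (real i * (real i - 1) - 2 * \<mu> * real i) + \<mu>^2)"
    by (auto simp: power2_eq_square algebra_simps)
  have "measure_pmf.expectation (poisson_pmf m) (\<lambda>i. (real i * (real i - 1) - 2 * \<mu> * real i) + \<mu>^2)
      = m^2 - 2 * \<mu> * m + \<mu>^2"
    using A1 A2 B1 B2 by (simp add: Bochner_Integration.integral_add Bochner_Integration.integral_diff)
  then show "measure_pmf.expectation (poisson_pmf m) (\<lambda>i. (real i - \<mu>)^2 - real i) = (m - \<mu>)^2"
    unfolding eq by (simp add: power2_eq_square algebra_simps)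
  show "integrable (poisson_pmf m) (\<lambda>i. (real i - \<mu>)^2 - real i)"
    unfolding eq using A1 B1 by auto
qed



lemma poisson_add:
  assumes a: "(a::real) > 0" and b: "b > 0"
  shows "bind_pmf (poisson_pmf a) (\<lambda>x. map_pmf (\<lambda>y. x + y) (poisson_pmf b)) = poisson_pmf (a + b)"
proof (rule pmf_eqI)
  fix m :: nat
  have pm: "pmf (map_pmf (\<lambda>y. x + y) (poisson_pmf b)) m = (if x \<le> m then pmf (poisson_pmf b) (m - x) else 0)" for x
  proof (cases "x \<le> m")
    case True
    have "pmf (map_pmf (\<lambda>y. x + y) (poisson_pmf b)) (x + (m - x)) = pmf (poisson_pmf b) (m - x)"
      by (rule pmf_map_inj') (auto simp: inj_on_def)
    with True show ?thesis by simp
  next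
    case False
    then have "m \<notin> set_pmf (map_pmf (\<lambda>y. x + y) (poisson_pmf b))" by auto
    with False show ?thesis by (simp add: pmf_eq_0_set_pmf)
  qed
  have "pmf (bind_pmf (poisson_pmf a) (\<lambda>x. map_pmf (\<lambda>y. x + y) (poisson_pmf b))) m
      = (\<Sum>x\<in>{..m}. pmf (map_pmf (\<lambda>y. x + y) (poisson_pmf b)) m * pmf (poisson_pmf a) x)"
    unfolding pmf_bind by (rule integral_measure_pmf_real) (auto simp: pm split: if_splits)
  also have "\<dots> = (\<Sum>x\<in>{..m}. (b ^ (m - x) / fact (m - x) * exp (-b)) * (a ^ x / fact x * exp (-a)))"
    using a b by (intro sum.cong) (auto simp: pm)
  also have "\<dots> = (\<Sum>x\<in>{..m}. of_nat (m choose x) * a ^ x * b ^ (m - x)) / fact m * exp (-(a+b))"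
    unfolding sum_divide_distrib sum_distrib_right
  proof (intro sum.cong refl)
    fix x assume "x \<in> {..m}"
    then have "x \<le> m" by simp
    then have c: "(of_nat (m choose x) :: real) = fact m / (fact x * fact (m - x))" by (rule binomial_fact)
    show "(b ^ (m - x) / fact (m - x) * exp (-b)) * (a ^ x / fact x * exp (-a))
        = of_nat (m choose x) * a ^ x * b ^ (m - x) / fact m * exp (-(a+b))"
      unfolding c by (simp add: field_simps exp_add exp_diff exp_minus)
  qed
  also have "(\<Sum>x\<in>{..m}. of_nat (m choose x) * a ^ x * b ^ (m - x)) = (a + b) ^ m"
    by (simp add: binomial_ring)
  finally show "pmf (bind_pmf (poisson_pmf a) (\<lambda>x. map_pmf (\<lambda>y. x + y) (poisson_pmf b))) m = pmf (poisson_pmf (a + b)) m"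
    using a b by simp
qed

lemma poisson_thin:
  assumes a: "(a::real) > 0" and q: "0 < q" "q \<le> 1"
  shows "bind_pmf (poisson_pmf a) (\<lambda>s. binomial_pmf s q) = poisson_pmf (a * q)"
proof (rule pmf_eqI)
  fix m :: nat
  define f where "f s = real (s choose m) * q ^ m * (1 - q) ^ (s - m)" for s
  have fnn: "f s \<ge> 0" for s using q by (simp add: f_def)
  have g: "pmf (poisson_pmf a) (i + m) * f (i + m) = ((a*q) ^ m / fact m * exp (-a)) * ((a * (1 - q)) ^ i / fact i)" for i
  proof -
    have c: "(of_nat ((i + m) choose m) :: real) = fact (i + m) / (fact m * fact i)"
      using binomial_fact[of m "i + m"] by simp
    have h: "(a * (1 - q)) ^ i = a^i * (1-q)^i" "(a*q)^m = a^m * q^m" by (simp_all add: power_mult_distrib)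
    show ?thesis using a unfolding f_def c h by (simp add: field_simps power_add power_mult_distrib)
  qed
  have "(\<lambda>i. ((a*q) ^ m / fact m * exp (-a)) * ((a * (1 - q)) ^ i / fact i)) sums (((a*q) ^ m / fact m * exp (-a)) * exp (a * (1 - q)))"
    by (rule sums_mult[OF exp_sums_real])
  then have "(\<lambda>i. pmf (poisson_pmf a) (i + m) * f (i + m)) sums (((a*q) ^ m / fact m * exp (-a)) * exp (a * (1 - q)))"
    by (simp only: g)
  moreover have "(\<Sum>i<m. pmf (poisson_pmf a) i * f i) = 0" by (intro sum.neutral) (simp add: f_def)
  ultimately have S: "(\<lambda>i. pmf (poisson_pmf a) i * f i) sums (((a*q) ^ m / fact m * exp (-a)) * exp (a * (1 - q)))"
    using sums_iff_shift[of "\<lambda>i. pmf (poisson_pmf a) i * f i" m] by simp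
  have "pmf (bind_pmf (poisson_pmf a) (\<lambda>s. binomial_pmf s q)) m = measure_pmf.expectation (poisson_pmf a) f"
    unfolding pmf_bind using q by (simp add: f_def[abs_def])
  also have "\<dots> = ((a*q) ^ m / fact m * exp (-a)) * exp (a * (1 - q))"
    by (rule pmf_sums_expectation(2)[OF fnn S])
  also have "\<dots> = pmf (poisson_pmf (a * q)) m"
    using a q by (simp add: field_simps exp_add[symmetric] right_diff_distrib)
  finally show "pmf (bind_pmf (poisson_pmf a) (\<lambda>s. binomial_pmf s q)) m = pmf (poisson_pmf (a * q)) m" .
qed



definition conv :: "nat pmf \<Rightarrow> nat pmf \<Rightarrow> nat pmf" where
  "conv P Q = bind_pmf P (\<lambda>x. map_pmf (\<lambda>y. x + y) Q)"

primrec sum_pmf :: "nat pmf list \<Rightarrow> nat pmf" where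
  "sum_pmf [] = return_pmf 0"
| "sum_pmf (P # Ps) = conv P (sum_pmf Ps)"

definition cnt :: "nat \<Rightarrow> (nat \<times> bool) list \<Rightarrow> nat" where
  "cnt j l = count (mset l) (j, True)"

lemma cnt_simps[simp]:
  "cnt j [] = 0" "cnt j (x # l) = (if x = (j, True) then 1 else 0) + cnt j l"
  "cnt j (l1 @ l2) = cnt j l1 + cnt j l2"
  by (auto simp: cnt_def)

lemma cnt_concat: "cnt j (concat ls) = sum_list (map (cnt j) ls)"
  by (induction ls) auto

lemma conv_return_left: "conv (return_pmf a) Q = map_pmf (\<lambda>y. a + y) Q"
  by (simp add: conv_def bind_return_pmf)

lemma conv_return_right: "conv P (return_pmf b) = map_pmf (\<lambda>x. x + b) P"
  by (simp add: conv_def map_pmf_def bind_return_pmf)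

lemma conv_0_left[simp]: "conv (return_pmf 0) Q = Q"
  by (simp add: conv_return_left)

lemma conv_0_right[simp]: "conv P (return_pmf 0) = P"
  by (simp add: conv_return_right)

lemma conv_map_left: "conv (map_pmf f P) Q = bind_pmf P (\<lambda>x. map_pmf (\<lambda>y. f x + y) Q)"
  by (simp add: conv_def bind_map_pmf)

lemma conv_comm: "conv P Q = conv Q P"
  unfolding conv_def map_pmf_def
  by (subst bind_commute_pmf) (simp add: add.commute)

lemma conv_assoc: "conv (conv P Q) R = conv P (conv Q R)"
  unfolding conv_def map_pmf_def
  by (simp add: bind_assoc_pmf bind_return_pmf add.assoc)

lemma conv_shift:
  "conv (map_pmf (\<lambda>y. a + y) P) (map_pmf (\<lambda>y. b + y) Q) = map_pmf (\<lambda>y. (a + b) + y) (conv P Q)"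
  unfolding conv_def map_pmf_def
  by (simp add: bind_assoc_pmf bind_return_pmf add_ac)

lemma bind_conv_left: "bind_pmf M (\<lambda>x. conv (f x) Q) = conv (bind_pmf M f) Q"
  unfolding conv_def by (simp add: bind_assoc_pmf)

lemma seq_pmf_sum:
  "map_pmf (\<lambda>ls. sum_list (map f ls)) (seq_pmf Ps) = sum_pmf (map (map_pmf f) Ps)"
proof (induction Ps)
  case Nil then show ?case by simp
next
  case (Cons P Ps)
  have "map_pmf (\<lambda>ls. sum_list (map f ls)) (seq_pmf (P # Ps))
      = bind_pmf P (\<lambda>x. map_pmf (\<lambda>y. f x + y) (map_pmf (\<lambda>ls. sum_list (map f ls)) (seq_pmf Ps)))"
    by (simp add: map_bind_pmf map_pmf_def bind_assoc_pmf bind_return_pmf)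
  also have "\<dots> = conv (map_pmf f P) (sum_pmf (map (map_pmf f) Ps))"
    by (simp add: Cons conv_map_left)
  finally show ?case by simp
qed

lemma sum_pmf_zeros: "(\<And>y. y \<in> set xs \<Longrightarrow> F y = return_pmf 0) \<Longrightarrow> sum_pmf (map F xs) = return_pmf 0"
  by (induction xs) auto

lemma sum_pmf_single:
  "distinct xs \<Longrightarrow> j \<in> set xs \<Longrightarrow> (\<And>y. y \<in> set xs \<Longrightarrow> y \<noteq> j \<Longrightarrow> F y = return_pmf 0)
   \<Longrightarrow> sum_pmf (map F xs) = F j"
proof (induction xs)
  case Nil then show ?case by simp
next
  case (Cons x xs)
  show ?case
  proof (cases "x = j")
    case True
    with Cons.prems have "sum_pmf (map F xs) = return_pmf 0"
      by (intro sum_pmf_zeros) auto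
    with True show ?thesis by simp
  next
    case False
    with Cons show ?thesis by auto
  qed
qed

lemma sum_pmf_shift:
  "sum_pmf (map (\<lambda>x. map_pmf (\<lambda>y. g x + y) Q) xs)
     = map_pmf (\<lambda>y. sum_list (map g xs) + y) (sum_pmf (replicate (length xs) Q))"
proof (induction xs)
  case Nil then show ?case by (simp add: map_pmf_def bind_return_pmf)
next
  case (Cons x xs)
  have "conv (map_pmf (\<lambda>y. g x + y) Q) (map_pmf (\<lambda>y. sum_list (map g xs) + y) (sum_pmf (replicate (length xs) Q)))
     = map_pmf (\<lambda>y. (g x + sum_list (map g xs)) + y) (conv Q (sum_pmf (replicate (length xs) Q)))"
    by (rule conv_shift)
  then show ?case using Cons by simp
qed

lemma sum_pmf_poisson:
  assumes "c > 0" "N \<ge> 1"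
  shows "sum_pmf (replicate N (poisson_pmf c)) = poisson_pmf (real N * c)"
  using assms(2)
proof (induction N rule: nat_induct_at_least)
  case base then show ?case by (simp add: conv_return_right map_pmf_def bind_return_pmf')
next
  case (Suc N)
  have "sum_pmf (replicate (Suc N) (poisson_pmf c)) = conv (poisson_pmf c) (poisson_pmf (real N * c))"
    using Suc by simp
  also have "\<dots> = poisson_pmf (c + real N * c)"
    unfolding conv_def using assms Suc by (intro poisson_add) auto
  finally show ?case by (simp add: algebra_simps)
qed

lemma replicate_pmf_map: "replicate_pmf N (map_pmf f p) = map_pmf (map f) (replicate_pmf N p)"
  by (induction N) (simp_all add: map_pmf_def bind_assoc_pmf bind_return_pmf)

lemma bernoulli_map: "bernoulli_pmf (pmf p j) = map_pmf (\<lambda>x. x = j) p"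
proof (rule pmf_eqI)
  fix b :: bool
  show "pmf (bernoulli_pmf (pmf p j)) b = pmf (map_pmf (\<lambda>x. x = j) p) b"
  proof (cases b)
    case True
    then show ?thesis by (simp add: pmf_map vimage_def measure_pmf_single pmf_le_1)
  next
    case False
    have "pmf (map_pmf (\<lambda>x. x = j) p) False = measure_pmf.prob p (- {j})"
      by (simp add: pmf_map vimage_def Compl_eq)
    also have "\<dots> = 1 - pmf p j"
      using measure_pmf.prob_compl[of "{j}" p] by (simp add: Compl_eq_Diff_UNIV measure_pmf_single)
    finally show ?thesis using False by (simp add: pmf_le_1)
  qed
qed

lemma binomial_count:
  "map_pmf (\<lambda>xs. length (filter (\<lambda>x. x = j) xs)) (replicate_pmf N p) = binomial_pmf N (pmf p j)"
proof -
  have "binomial_pmf N (pmf p j) = map_pmf (length \<circ> filter id) (replicate_pmf N (map_pmf (\<lambda>x. x = j) p))"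
    by (subst binomial_pmf_altdef) (auto simp: pmf_le_1 bernoulli_map)
  also have "\<dots> = map_pmf (\<lambda>xs. length (filter (\<lambda>x. x = j) xs)) (replicate_pmf N p)"
    by (simp add: replicate_pmf_map map_pmf_comp filter_map o_def)
  finally show ?thesis by simp
qed



lemma cnt_map_pair: "cnt j (map (\<lambda>b. (j', b)) bs) = (if j' = j then length (filter id bs) else 0)"
  by (induction bs) (auto simp: id_def)

lemma thin_half:
  assumes "r > 0"
  shows "bind_pmf (poisson_pmf r) (\<lambda>s. map_pmf (\<lambda>bs. length (filter id bs)) (replicate_pmf s (bernoulli_pmf (1/2))))
       = poisson_pmf (r / 2)"
proof -
  have "bind_pmf (poisson_pmf r) (\<lambda>s. map_pmf (\<lambda>bs. length (filter id bs)) (replicate_pmf s (bernoulli_pmf (1/2))))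
      = bind_pmf (poisson_pmf r) (\<lambda>s. binomial_pmf s (1/2))"
    by (subst binomial_pmf_altdef) (auto simp: o_def)
  also have "\<dots> = poisson_pmf (r * (1/2))" using assms by (intro poisson_thin) auto
  finally show ?thesis by simp
qed

lemma coord_other:
  "j' \<noteq> j \<Longrightarrow> map_pmf (cnt j) (coord_msgs r x j') = return_pmf 0"
  unfolding coord_msgs_def
  by (simp add: map_bind_pmf cnt_map_pair bind_return_pmf' bind_pmf_const)

lemma coord_same:
  assumes "r > 0"
  shows "map_pmf (cnt j) (coord_msgs r x j) = map_pmf (\<lambda>y. (if x = j then 1 else 0) + y) (poisson_pmf (r / 2))"
proof -
  have "map_pmf (cnt j) (coord_msgs r x j)
      = bind_pmf (poisson_pmf r) (\<lambda>s. map_pmf (\<lambda>y. (if x = j then 1 else 0) + y)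
           (map_pmf (\<lambda>bs. length (filter id bs)) (replicate_pmf s (bernoulli_pmf (1/2)))))"
    unfolding coord_msgs_def
    by (simp add: map_bind_pmf cnt_map_pair map_pmf_comp map_pmf_def[symmetric])
  also have "\<dots> = map_pmf (\<lambda>y. (if x = j then 1 else 0) + y)
      (bind_pmf (poisson_pmf r) (\<lambda>s. map_pmf (\<lambda>bs. length (filter id bs)) (replicate_pmf s (bernoulli_pmf (1/2)))))"
    by (simp add: map_bind_pmf)
  also have "\<dots> = map_pmf (\<lambda>y. (if x = j then 1 else 0) + y) (poisson_pmf (r / 2))"
    using assms by (simp add: thin_half)
  finally show ?thesis .
qed

lemma user_cnt:
  assumes "r > 0" "j \<in> {1..k}"
  shows "map_pmf (cnt j) (user_msgs k r x) = map_pmf (\<lambda>y. (if x = j then 1 else 0) + y) (poisson_pmf (r / 2))"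
proof -
  have "map_pmf (cnt j) (user_msgs k r x) = map_pmf (\<lambda>ls. sum_list (map (cnt j) ls)) (seq_pmf (map (coord_msgs r x) [1..<Suc k]))"
    unfolding user_msgs_def by (simp add: map_pmf_comp cnt_concat)
  also have "\<dots> = sum_pmf (map (\<lambda>j'. map_pmf (cnt j) (coord_msgs r x j')) [1..<Suc k])"
    by (simp add: seq_pmf_sum o_def)
  also have "\<dots> = map_pmf (cnt j) (coord_msgs r x j)"
    using assms by (intro sum_pmf_single) (auto simp: coord_other)
  also have "\<dots> = map_pmf (\<lambda>y. (if x = j then 1 else 0) + y) (poisson_pmf (r / 2))"
    by (rule coord_same[OF assms(1)])
  finally show ?thesis .
qed

lemma blanket_cnt:
  assumes "lam > 0" "j \<in> {1..k}"
  shows "map_pmf (cnt j) (blanket_msgs k lam) = poisson_pmf (lam / 2)"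
proof -
  define B :: "nat \<Rightarrow> (nat \<times> bool) list pmf" where "B j' = do {
      s \<leftarrow> poisson_pmf lam;
      bs \<leftarrow> replicate_pmf s (bernoulli_pmf (1/2));
      return_pmf (map (\<lambda>b. (j', b)) bs) }" for j'
  have "map_pmf (cnt j) (blanket_msgs k lam) = map_pmf (\<lambda>ls. sum_list (map (cnt j) ls)) (seq_pmf (map B [1..<Suc k]))"
    unfolding blanket_msgs_def B_def by (simp add: map_pmf_comp cnt_concat)
  also have "\<dots> = sum_pmf (map (\<lambda>j'. map_pmf (cnt j) (B j')) [1..<Suc k])"
    by (simp add: seq_pmf_sum o_def)
  also have "\<dots> = map_pmf (cnt j) (B j)"
    using assms by (intro sum_pmf_single)
      (auto simp: B_def map_bind_pmf cnt_map_pair bind_return_pmf' bind_pmf_const)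
  also have "\<dots> = bind_pmf (poisson_pmf lam) (\<lambda>s. map_pmf (\<lambda>bs. length (filter id bs)) (replicate_pmf s (bernoulli_pmf (1/2))))"
    unfolding B_def by (simp add: map_bind_pmf cnt_map_pair map_pmf_def[symmetric] map_pmf_comp)
  also have "\<dots> = poisson_pmf (lam / 2)" by (rule thin_half[OF assms(1)])
  finally show ?thesis .
qed



lemma sum_ind_length: "sum_list (map (\<lambda>x. if x = j then 1 else 0) xs) = length (filter (\<lambda>x. x = j) xs)"
  by (induction xs) auto

lemma protocol_cnt:
  assumes n: "n > 0" and lam: "lam > 0" and j: "j \<in> {1..k}"
  shows "map_pmf (\<lambda>M. count M (j, True)) (protocol k n lam p) = poisson_pmf (n * pmf p j + lam / 2)"
proof -
  define q where "q = pmf p j"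
  have q01: "0 \<le> q" "q \<le> 1" by (auto simp: q_def pmf_le_1)
  define ms where "ms N = (if N = 0 then blanket_msgs k lam
            else do {
              xs \<leftarrow> replicate_pmf N p;
              mss \<leftarrow> seq_pmf (map (user_msgs k (lam / real N)) xs);
              return_pmf (concat mss) })" for N
  have step1: "map_pmf (\<lambda>M. count M (j, True)) (protocol k n lam p) = bind_pmf (poisson_pmf n) (\<lambda>N. map_pmf (cnt j) (ms N))"
    unfolding protocol_def ms_def[symmetric]
    by (simp add: map_bind_pmf cnt_def[abs_def] map_pmf_def[symmetric] map_pmf_comp)
  have step2: "map_pmf (cnt j) (ms N) = conv (binomial_pmf N q) (poisson_pmf (lam / 2))" for N
  proof (cases "N = 0")
    case True
    then show ?thesis using q01 by (simp add: ms_def blanket_cnt[OF lam j] binomial_pmf_0)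
  next
    case False
    define r where "r = lam / real N"
    have r: "r > 0" using False lam by (simp add: r_def)
    have "map_pmf (cnt j) (ms N) = bind_pmf (replicate_pmf N p)
        (\<lambda>xs. map_pmf (\<lambda>mss. sum_list (map (cnt j) mss)) (seq_pmf (map (user_msgs k r) xs)))"
      using False unfolding ms_def r_def
      by (simp add: map_bind_pmf cnt_concat map_pmf_def[symmetric] map_pmf_comp)
    also have "\<dots> = bind_pmf (replicate_pmf N p)
        (\<lambda>xs. sum_pmf (map (\<lambda>x. map_pmf (\<lambda>y. (if x = j then 1 else 0) + y) (poisson_pmf (r / 2))) xs))"
      by (simp add: seq_pmf_sum o_def user_cnt[OF r j])
    also have "\<dots> = bind_pmf (replicate_pmf N p)
        (\<lambda>xs. map_pmf (\<lambda>y. length (filter (\<lambda>x. x = j) xs) + y) (poisson_pmf (lam / 2)))"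
    proof (intro bind_pmf_cong refl)
      fix xs assume "xs \<in> set_pmf (replicate_pmf N p)"
      then have len: "length xs = N" by (simp add: set_replicate_pmf)
      have "real N * (r / 2) = lam / 2" using False by (simp add: r_def)
      then show "sum_pmf (map (\<lambda>x. map_pmf (\<lambda>y. (if x = j then 1 else 0) + y) (poisson_pmf (r / 2))) xs)
          = map_pmf (\<lambda>y. length (filter (\<lambda>x. x = j) xs) + y) (poisson_pmf (lam / 2))"
        using False r
        by (simp add: sum_pmf_shift len sum_pmf_poisson sum_ind_length)
    qed
    also have "\<dots> = conv (map_pmf (\<lambda>xs. length (filter (\<lambda>x. x = j) xs)) (replicate_pmf N p)) (poisson_pmf (lam / 2))"
      by (simp add: conv_map_left)
    also have "\<dots> = conv (binomial_pmf N q) (poisson_pmf (lam / 2))"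
      by (simp add: binomial_count q_def)
    finally show ?thesis .
  qed
  have "map_pmf (\<lambda>M. count M (j, True)) (protocol k n lam p)
      = conv (bind_pmf (poisson_pmf n) (\<lambda>N. binomial_pmf N q)) (poisson_pmf (lam / 2))"
    by (simp add: step1 step2 bind_conv_left)
  also have "\<dots> = poisson_pmf (n * q + lam / 2)"
  proof (cases "q = 0")
    case True
    have "binomial_pmf N q = return_pmf 0" for N
      using True by (simp add: set_pmf_subset_singleton[symmetric])
    then show ?thesis using True by (simp add: bind_pmf_const)
  next
    case False
    then have "q > 0" using q01 by simp
    then have "bind_pmf (poisson_pmf n) (\<lambda>N. binomial_pmf N q) = poisson_pmf (n * q)"
      using n q01 by (intro poisson_thin) auto
    moreover have "conv (poisson_pmf (n * q)) (poisson_pmf (lam / 2)) = poisson_pmf (n * q + lam / 2)"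
      unfolding conv_def using n lam \<open>q > 0\<close> by (intro poisson_add) auto
    ultimately show ?thesis by simp
  qed
  finally show ?thesis by (simp add: q_def)
qed



theorem lemma3p3:
  fixes k :: nat and n lam \<alpha> :: real and p :: "nat pmf"
  assumes "k \<ge> 2" and "n > 0" and "lam > 0"
    and "set_pmf p \<subseteq> {1..k}"
    and "0 < \<alpha>" and "\<alpha> \<le> 1"
  shows "measure_pmf.expectation (protocol k n lam p) (stat_Z k n lam)
           = n * real k * (\<Sum>j = 1..k. (pmf p j - pmf (unif k) j)\<^sup>2)
         \<and> (p = unif k \<longrightarrow> measure_pmf.expectation (protocol k n lam p) (stat_Z k n lam) = 0)
         \<and> (dTV k p (unif k) > \<alpha> \<longrightarrow>
              measure_pmf.expectation (protocol k n lam p) (stat_Z k n lam) > 4 * n * \<alpha>\<^sup>2)"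
proof -
  note k = assms(1) and n = assms(2) and lam = assms(3)
  define \<mu> where "\<mu> = n / real k + lam / 2"
  define h where "h i = (real i - \<mu>)^2 - real i" for i :: nat
  define P where "P = protocol k n lam p"
  have U: "pmf (unif k) j = 1 / real k" if "j \<in> {1..k}" for j
    using that k by (simp add: unif_def)
  have Z: "stat_Z k n lam M = real k / n * (\<Sum>j = 1..k. h (count M (j, True)))" for M
    by (simp add: stat_Z_def msg_count_def h_def \<mu>_def Let_def)
  have Ej: "integrable P (\<lambda>M. h (count M (j, True))) \<and>
            measure_pmf.expectation P (\<lambda>M. h (count M (j, True))) = (n * pmf p j - n / real k)^2"
    if j: "j \<in> {1..k}" for j
  proof -
    have m: "n * pmf p j + lam / 2 > 0" using n lam by (simp add: add_nonneg_pos)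
    have D: "map_pmf (\<lambda>M. count M (j, True)) P = poisson_pmf (n * pmf p j + lam / 2)"
      unfolding P_def by (rule protocol_cnt[OF n lam j])
    have "integrable (map_pmf (\<lambda>M. count M (j, True)) P) h"
      unfolding D h_def by (rule poisson_quad(1)[OF m])
    moreover have "measure_pmf.expectation (map_pmf (\<lambda>M. count M (j, True)) P) h = (n * pmf p j - n / real k)^2"
      unfolding D h_def poisson_quad(2)[OF m] by (simp add: \<mu>_def)
    ultimately show ?thesis by simp
  qed
  have "measure_pmf.expectation P (stat_Z k n lam)
      = real k / n * (\<Sum>j = 1..k. measure_pmf.expectation P (\<lambda>M. h (count M (j, True))))"
    unfolding Z using Ej by (simp add: Bochner_Integration.integral_sum)
  also have "\<dots> = real k / n * (\<Sum>j = 1..k. (n * pmf p j - n / real k)^2)"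
    using Ej by simp
  also have "\<dots> = n * real k * (\<Sum>j = 1..k. (pmf p j - pmf (unif k) j)\<^sup>2)"
  proof -
    have "(\<Sum>j = 1..k. (n * pmf p j - n / real k)^2) = n^2 * (\<Sum>j = 1..k. (pmf p j - pmf (unif k) j)\<^sup>2)"
      unfolding sum_distrib_left by (intro sum.cong refl) (simp add: U power2_eq_square algebra_simps)
    then show ?thesis using n by (simp add: power2_eq_square)
  qed
  finally have E: "measure_pmf.expectation P (stat_Z k n lam) = n * real k * (\<Sum>j = 1..k. (pmf p j - pmf (unif k) j)\<^sup>2)" .
  have part3: "measure_pmf.expectation P (stat_Z k n lam) > 4 * n * \<alpha>\<^sup>2" if "dTV k p (unif k) > \<alpha>"
  proof -
    define d where "d j = \<bar>pmf p j - pmf (unif k) j\<bar>" for j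
    have s: "(\<Sum>j = 1..k. d j) > 2 * \<alpha>" using that by (simp add: dTV_def d_def)
    have "(2 * \<alpha>)^2 < (\<Sum>j = 1..k. d j)^2"
      using s assms(5) by (intro power_strict_mono) auto
    also have "\<dots> \<le> (\<Sum>j = 1..k. (d j)^2) * real k"
      using sum_squared_le_sum_of_squares[of d "{1..k}"] by simp
    also have "(\<Sum>j = 1..k. (d j)^2) = (\<Sum>j = 1..k. (pmf p j - pmf (unif k) j)\<^sup>2)"
      by (simp add: d_def)
    finally have "4 * \<alpha>^2 < real k * (\<Sum>j = 1..k. (pmf p j - pmf (unif k) j)\<^sup>2)"
      by (simp add: power2_eq_square algebra_simps)
    then have "n * (4 * \<alpha>^2) < n * (real k * (\<Sum>j = 1..k. (pmf p j - pmf (unif k) j)\<^sup>2))"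
      using n by simp
    then show ?thesis unfolding E by (simp add: algebra_simps)
  qed
  show ?thesis
    unfolding P_def[symmetric] using E part3 by auto
qed


end
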